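(* Let $(X,d)$ be a finite metric space and $k$ a positive integer. For a nonempty $S\subseteq X$ and $t\in[k]$, let $(\mathcal{C}_1,\dots,\mathcal{C}_t)$ be the output of $\mathtt{recMSD}(S,t)$, and let $\operatorname{opt}_i(S)$ denote the cost of an optimal $i$-clustering of $S$. Then for every $\varepsilon\in[0,1)$ and every $r\in\{1,\dots,t\}$, $$\Pr\left[\operatorname{cost}(\mathcal{C}_r)\le \frac{\operatorname{opt}_r(S)}{1-\varepsilon}\right]\ge \varepsilon^{r-1}.$$
   Context: An $i$-clustering of a set $S$ is a collection of at most $i$ subsets whose union is $S$; its cost is $\operatorname{cost}(\mathcal{C})=\sum_{C\in\mathcal{C}}\operatorname{diam}(C)$ with $\operatorname{diam}(C)=\max_{p,q\in C}d(p,q)$. $\operatorname{Ball}(x,R)=\{z\in X: d(x,z)\le R\}$. The randomized procedure $\mathtt{recMSD}(S,t)$ (for nonempty $S\subseteq X$, $t\in[k]$) is: set $\mathcal{C}_i\gets\{S\}$ for all $i\in\{1,\dots,t\}$; if $t=1$ or $|S|=1$, return $(\mathcal{C}_1,\dots,\mathcal{C}_t)$. Otherwise let $x,y\in S$ with $d(x,y)=\operatorname{diam}(S)$, choose $R\in[0,\operatorname{diam}(S)]$ uniformly at random, let $S_1=S\cap\operatorname{Ball}(x,R)$ and $S_2=S\setminus\operatorname{Ball}(x,R)$, compute (with independent randomness) $\mathcal{A}=\mathtt{recMSD}(S_1,t-1)$ and $\mathcal{B}=\mathtt{recMSD}(S_2,t-1)$; then for all $i,j\in\{1,\dots,t-1\}$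 with $i+j\le t$, if $\operatorname{cost}(\mathcal{A}_i\cup\mathcal{B}_j)<\operatorname{cost}(\mathcal{C}_{i+j})$ set $\mathcal{C}_{i+j}\gets\mathcal{A}_i\cup\mathcal{B}_j$. Return $(\mathcal{C}_1,\dots,\mathcal{C}_t)$. *)

theory Defs
  imports "HOL-Probability.Probability"
begin

definition diam :: "('a \<Rightarrow> 'a \<Rightarrow> real) \<Rightarrow> 'a set \<Rightarrow> real" where
  "diam d C = (if C = {} then 0 else Max {d p q | p q. p \<in> C \<and> q \<in> C})"

definition cost :: "('a \<Rightarrow> 'a \<Rightarrow> real) \<Rightarrow> 'a set set \<Rightarrow> real" where
  "cost d Cs = (\<Sum>C\<in>Cs. diam d C)"

definition is_clustering :: "nat \<Rightarrow> 'a set \<Rightarrow> 'a set set \<Rightarrow> bool" where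
  "is_clustering i S Cs \<longleftrightarrow> finite Cs \<and> card Cs \<le> i \<and> \<Union>Cs = S"

definition opt :: "('a \<Rightarrow> 'a \<Rightarrow> real) \<Rightarrow> nat \<Rightarrow> 'a set \<Rightarrow> real" where
  "opt d i S = Inf {cost d Cs | Cs. is_clustering i S Cs}"

definition metric_on :: "'a set \<Rightarrow> ('a \<Rightarrow> 'a \<Rightarrow> real) \<Rightarrow> bool" where
  "metric_on X d \<longleftrightarrow> (\<forall>x\<in>X. \<forall>y\<in>X. d x y \<ge> 0 \<and> (d x y = 0 \<longleftrightarrow> x = y) \<and> d x y = d y x)
     \<and> (\<forall>x\<in>X. \<forall>y\<in>X. \<forall>z\<in>X. d x z \<le> d x y + d y z)"

definition diam_selector :: "'a set \<Rightarrow> ('a \<Rightarrow> 'a \<Rightarrow> real) \<Rightarrow> ('a set \<Rightarrow> 'a \<times> 'a) \<Rightarrow> bool" where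
  "diam_selector X d sel \<longleftrightarrow> (\<forall>S. S \<subseteq> X \<and> S \<noteq> {} \<longrightarrow>
      fst (sel S) \<in> S \<and> snd (sel S) \<in> S \<and> d (fst (sel S)) (snd (sel S)) = diam d S)"

definition combine :: "('a \<Rightarrow> 'a \<Rightarrow> real) \<Rightarrow> nat \<Rightarrow> (nat \<Rightarrow> 'a set set) \<Rightarrow> (nat \<Rightarrow> 'a set set)
   \<Rightarrow> (nat \<Rightarrow> 'a set set) \<Rightarrow> (nat \<Rightarrow> 'a set set)" where
  "combine d t A B C0 = foldl (\<lambda>C (i,j). if cost d (A i \<union> B j) < cost d (C (i+j))
                                           then C((i+j) := A i \<union> B j) else C)
      C0 [(i,j). i \<leftarrow> [1..<t], j \<leftarrow> [1..<t], i + j \<le> t]"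

text \<open>recMSD, with its randomness supplied explicitly: each node of the recursion tree is
  identified by its path p (a list of 0/1 choices), and uses its own random number
  \<omega> p \<in> [0,1]; the radius is R = \<omega> p * diam S, uniform on [0, diam S] when \<omega> p is
  uniform on [0,1].  The output is the map i \<mapsto> C_i (meaningful for 1 \<le> i \<le> t).\<close>
fun recMSD :: "('a set \<Rightarrow> 'a \<times> 'a) \<Rightarrow> ('a \<Rightarrow> 'a \<Rightarrow> real) \<Rightarrow> (nat list \<Rightarrow> real) \<Rightarrow> nat list
      \<Rightarrow> 'a set \<Rightarrow> nat \<Rightarrow> (nat \<Rightarrow> 'a set set)" where
  "recMSD sel d \<omega> p S 0 = (\<lambda>i. {S})"
| "recMSD sel d \<omega> p S (Suc t') =
     (if t' = 0 \<or> card S \<le> 1 then (\<lambda>i. {S})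
      else (let x = fst (sel S);
                R = \<omega> p * diam d S;
                S1 = {z \<in> S. d x z \<le> R};
                S2 = S - S1;
                A = recMSD sel d \<omega> (0 # p) S1 t';
                B = recMSD sel d \<omega> (1 # p) S2 t'
            in combine d (Suc t') A B (\<lambda>i. {S})))"

definition rand_space :: "(nat list \<Rightarrow> real) measure" where
  "rand_space = PiM UNIV (\<lambda>_. uniform_measure lborel {0..1::real})"

end

theory Submission
  imports Defs
begin


definition cstep where
  "cstep d A B = (\<lambda>C (i,j). if cost d (A i \<union> B j) < cost d (C (i+j))
                                           then C((i+j) := A i \<union> B j) else C)"

lemma combine_alt: "combine d t A B C0 = foldl (cstep d A B) C0 [(i,j). i \<leftarrow> [1..<t], j \<leftarrow> [1..<t], i + j \<le> t]"
  unfolding combine_def cstep_def by simp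

lemma foldl_cstep_mono: "cost d (foldl (cstep d A B) C L k) \<le> cost d (C k)"
proof (induction L arbitrary: C)
  case Nil then show ?case by simp
next
  case (Cons a L)
  obtain i j where a: "a = (i,j)" by force
  have "cost d (cstep d A B C a k) \<le> cost d (C k)"
    unfolding a cstep_def by auto
  then show ?case using Cons.IH[of "cstep d A B C a"] by simp
qed

lemma foldl_cstep_pair: "(i,j) \<in> set L \<Longrightarrow> cost d (foldl (cstep d A B) C L (i+j)) \<le> cost d (A i \<union> B j)"
proof (induction L arbitrary: C)
  case Nil then show ?case by simp
next
  case (Cons a L)
  show ?case
  proof (cases "a = (i,j)")
    case True
    have "cost d (cstep d A B C a (i+j)) \<le> cost d (A i \<union> B j)"
      unfolding True cstep_def by auto
    then show ?thesis using foldl_cstep_mono[of d A B "cstep d A B C a" L "i+j"] by simp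
  next
    case False
    then show ?thesis using Cons by simp
  qed
qed

lemma foldl_cstep_prop:
  assumes "\<And>i. P (C i)" "\<And>i j. P (A i \<union> B j)"
  shows "P (foldl (cstep d A B) C L k)"
  using assms(1)
proof (induction L arbitrary: C)
  case Nil then show ?case by simp
next
  case (Cons a L)
  obtain i j where a: "a = (i,j)" by force
  have "\<And>k. P (cstep d A B C a k)"
    unfolding a cstep_def using Cons.prems assms(2) by auto
  then show ?case using Cons.IH by simp
qed

lemma combine_mono: "cost d (combine d t A B C0 k) \<le> cost d (C0 k)"
  unfolding combine_alt by (rule foldl_cstep_mono)

lemma combine_pair:
  assumes "1 \<le> i" "1 \<le> j" "i + j \<le> t"
  shows "cost d (combine d t A B C0 (i+j)) \<le> cost d (A i \<union> B j)"
  unfolding combine_alt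
  by (rule foldl_cstep_pair) (use assms in auto)

lemma combine_prop:
  assumes "\<And>i. P (C0 i)" "\<And>i j. P (A i \<union> B j)"
  shows "P (combine d t A B C0 k)"
  unfolding combine_alt using assms by (rule foldl_cstep_prop)

lemma recMSD_shift: "recMSD sel d \<omega> (p @ p0) S t = recMSD sel d (\<lambda>q. \<omega> (q @ p0)) p S t"
proof (induction t arbitrary: p S)
  case 0 then show ?case by simp
next
  case (Suc t)
  show ?case using Suc.IH[of "0 # p"] Suc.IH[of "Suc 0 # p"] by (simp add: Let_def)
qed

lemma recMSD_sub: "finite (recMSD sel d \<omega> p S t i) \<and> (\<forall>C\<in>recMSD sel d \<omega> p S t i. C \<subseteq> S)"
proof (induction t arbitrary: p S i)
  case 0 then show ?case by simp
next
  case (Suc t)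
  show ?case
  proof (cases "t = 0 \<or> card S \<le> 1")
    case True then show ?thesis by simp
  next
    case False
    define S1 where "S1 = {z \<in> S. d (fst (sel S)) z \<le> \<omega> p * diam d S}"
    have h: "finite (recMSD sel d \<omega> (0#p) S1 t a \<union> recMSD sel d \<omega> (1#p) (S - S1) t b) \<and>
       (\<forall>C\<in>recMSD sel d \<omega> (0#p) S1 t a \<union> recMSD sel d \<omega> (1#p) (S - S1) t b. C \<subseteq> S)" for a b
      using Suc.IH[of "0#p" S1 a] Suc.IH[of "1#p" "S - S1" b] unfolding S1_def by auto
    show ?thesis using False
      apply (simp add: Let_def S1_def[symmetric])
      apply (rule combine_prop[where P="\<lambda>Cs. finite Cs \<and> (\<forall>C\<in>Cs. C \<subseteq> S)"])
      using h by auto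
  qed
qed

lemma recMSD_le_diam: "cost d (recMSD sel d \<omega> p S t i) \<le> diam d S"
proof (cases t)
  case 0 then show ?thesis by (simp add: cost_def)
next
  case (Suc t')
  then show ?thesis
    using combine_mono[of d "Suc t'" _ _ "\<lambda>i. {S}" i] by (auto simp: Let_def cost_def)
qed



abbreviation "U \<equiv> uniform_measure lborel {0..1::real}"

lemma space_U: "space U = UNIV" by simp

lemma space_rand: "space rand_space = UNIV"
  unfolding rand_space_def by (simp add: space_PiM)

lemma prob_U: "prob_space U"
  by (rule prob_space_uniform_measure) auto

lemma prob_rand: "prob_space rand_space"
  unfolding rand_space_def by (rule prob_space_PiM) (rule prob_U)

definition srv :: "((nat list \<Rightarrow> real) \<Rightarrow> 'b) \<Rightarrow> bool" where
  "srv f \<longleftrightarrow> finite (range f) \<and> (\<forall>v. f -` {v} \<in> sets rand_space)"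

lemma srv_const: "srv (\<lambda>\<omega>. c)"
proof -
  have "(\<lambda>\<omega>. c) -` {v} = (if v = c then space rand_space else {})" for v
    by (auto simp: space_rand)
  then show ?thesis unfolding srv_def by (auto simp: image_def)
qed

lemma srv_comb:
  assumes f: "srv f" and g: "srv g"
  shows "srv (\<lambda>\<omega>. h (f \<omega>) (g \<omega>))"
proof -
  have fin: "finite (range f)" "finite (range g)" using f g by (auto simp: srv_def)
  have "range (\<lambda>\<omega>. h (f \<omega>) (g \<omega>)) \<subseteq> (\<lambda>(a,b). h a b) ` (range f \<times> range g)"
    by (auto simp: image_iff)
  then have "finite (range (\<lambda>\<omega>. h (f \<omega>) (g \<omega>)))"
    by (rule finite_subset) (use fin in auto)
  moreover have "(\<lambda>\<omega>. h (f \<omega>) (g \<omega>)) -` {v} \<in> sets rand_space" for v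
  proof -
    have eq: "(\<lambda>\<omega>. h (f \<omega>) (g \<omega>)) -` {v} =
       (\<Union>ab\<in>{ab \<in> range f \<times> range g. h (fst ab) (snd ab) = v}. f -` {fst ab} \<inter> g -` {snd ab})"
      by force
    show ?thesis unfolding eq
      using f g fin by (intro sets.finite_UN) (auto simp: srv_def)
  qed
  ultimately show ?thesis by (simp add: srv_def)
qed

lemma srv_pred: "srv f \<Longrightarrow> {\<omega> \<in> space rand_space. P (f \<omega>)} \<in> sets rand_space"
proof -
  assume f: "srv f"
  have eq: "{\<omega> \<in> space rand_space. P (f \<omega>)} = (\<Union>v\<in>{v\<in>range f. P v}. f -` {v})"
    by (auto simp: space_rand)
  show ?thesis unfolding eq using f by (intro sets.finite_UN) (auto simp: srv_def)
qed

lemma srv_comp: "srv f \<Longrightarrow> srv (\<lambda>\<omega>. h (f \<omega>))"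
proof -
  assume f: "srv f"
  have "srv (\<lambda>\<omega>. (\<lambda>a b. h a) (f \<omega>) ((\<lambda>_. ()) \<omega>))"
    by (rule srv_comb[OF f srv_const])
  then show ?thesis by simp
qed

lemma srv_S1:
  assumes "finite S"
  shows "srv (\<lambda>\<omega>. {z \<in> S. c z \<le> \<omega> p * D})"
proof -
  have "range (\<lambda>\<omega>. {z \<in> S. c z \<le> \<omega> p * D}) \<subseteq> Pow S" by auto
  then have "finite (range (\<lambda>\<omega>. {z \<in> S. c z \<le> \<omega> p * D}))"
    by (rule finite_subset) (use assms in auto)
  moreover have "(\<lambda>\<omega>. {z \<in> S. c z \<le> \<omega> p * D}) -` {T} \<in> sets rand_space" for T
  proof -
    have eq: "(\<lambda>\<omega>. {z \<in> S. c z \<le> \<omega> p * D}) -` {T} =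
       {\<omega> \<in> space rand_space. T \<subseteq> S \<and> (\<forall>z\<in>S. (c z \<le> \<omega> p * D) = (z \<in> T))}"
      unfolding space_rand by blast
    have m: "(\<lambda>\<omega>. \<omega> p) \<in> borel_measurable rand_space"
    proof -
      have "(\<lambda>\<omega>. \<omega> p) \<in> rand_space \<rightarrow>\<^sub>M U"
        unfolding rand_space_def by (rule measurable_component_singleton) auto
      moreover have "(\<lambda>x. x) \<in> U \<rightarrow>\<^sub>M borel"
        by (rule measurable_ident_sets) simp
      ultimately show ?thesis by (rule measurable_compose)
    qed
    show ?thesis unfolding eq using assms m by measurable
  qed
  ultimately show ?thesis by (simp add: srv_def)
qed

lemma srv_fun:
  assumes "finite F" "\<And>T. T \<in> F \<Longrightarrow> srv (A T)"
  shows "srv (\<lambda>\<omega>. \<lambda>T. if T \<in> F then A T \<omega> else undefined)"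
  using assms
proof (induction F rule: finite_induct)
  case empty
  then show ?case using srv_const by simp
next
  case (insert T0 F)
  have ih: "srv (\<lambda>\<omega>. \<lambda>T. if T \<in> F then A T \<omega> else undefined)" using insert by auto
  have a0: "srv (A T0)" using insert by auto
  have "srv (\<lambda>\<omega>. (\<lambda>T. if T \<in> F then A T \<omega> else undefined)(T0 := A T0 \<omega>))"
    using srv_comb[OF ih a0, of "\<lambda>g a. g(T0 := a)"] by simp
  moreover have "(\<lambda>\<omega>. (\<lambda>T. if T \<in> F then A T \<omega> else undefined)(T0 := A T0 \<omega>))
      = (\<lambda>\<omega>. \<lambda>T. if T \<in> insert T0 F then A T \<omega> else undefined)"
    by (auto simp: fun_eq_iff)
  ultimately show ?case by simp
qed

lemma srv_rec: "finite S \<Longrightarrow> srv (\<lambda>\<omega>. recMSD sel d \<omega> p S t)"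
proof (induction t arbitrary: p S)
  case 0 then show ?case by (simp add: srv_const)
next
  case (Suc t)
  show ?case
  proof (cases "t = 0 \<or> card S \<le> 1")
    case True then show ?thesis by (simp add: srv_const)
  next
    case False
    define x where "x = fst (sel S)"
    define S1 where "S1 = (\<lambda>\<omega>. {z \<in> S. d x z \<le> \<omega> p * diam d S})"
    define LA where "LA = (\<lambda>\<omega>. \<lambda>T. if T \<in> Pow S then recMSD sel d \<omega> (0#p) T t else undefined)"
    define LB where "LB = (\<lambda>\<omega>. \<lambda>T. if T \<in> Pow S then recMSD sel d \<omega> (1#p) T t else undefined)"
    have fS: "finite (Pow S)" using Suc.prems by simp
    have a: "srv LA" unfolding LA_def
      by (rule srv_fun[OF fS]) (auto intro: Suc.IH finite_subset[OF _ Suc.prems])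
    have b: "srv LB" unfolding LB_def
      by (rule srv_fun[OF fS]) (auto intro: Suc.IH finite_subset[OF _ Suc.prems])
    have s1: "srv S1" unfolding S1_def by (rule srv_S1[OF Suc.prems])
    have "srv (\<lambda>\<omega>. (\<lambda>T (la, lb). combine d (Suc t) (la T) (lb (S - T)) (\<lambda>i. {S})) (S1 \<omega>) (LA \<omega>, LB \<omega>))"
      by (rule srv_comb[OF s1 srv_comb[OF a b]])
    moreover have "(\<lambda>\<omega>. (\<lambda>T (la, lb). combine d (Suc t) (la T) (lb (S - T)) (\<lambda>i. {S})) (S1 \<omega>) (LA \<omega>, LB \<omega>))
       = (\<lambda>\<omega>. recMSD sel d \<omega> p S (Suc t))"
      using False by (auto simp: fun_eq_iff Let_def LA_def LB_def S1_def x_def)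
    ultimately show ?thesis by simp
  qed
qed



interpretation R: prob_space rand_space by (rule prob_rand)
interpretation UU: prob_space U by (rule prob_U)

lemma indep_coord: "R.indep_vars (\<lambda>_. U) (\<lambda>i \<omega>. \<omega> i) UNIV"
proof (subst R.indep_vars_iff_distr_eq_PiM)
  show "(\<lambda>\<omega>. \<omega> i) \<in> rand_space \<rightarrow>\<^sub>M U" for i :: "nat list"
    unfolding rand_space_def by (rule measurable_component_singleton) auto
  have 1: "(\<lambda>x. \<lambda>i\<in>UNIV. x i) = (\<lambda>x::nat list \<Rightarrow> real. x)" by (auto simp: fun_eq_iff)
  have 2: "distr rand_space U (\<lambda>\<omega>. \<omega> i) = U" for i
    unfolding rand_space_def by (rule distr_PiM_component) (auto intro: prob_U)
  show "distr rand_space (\<Pi>\<^sub>M i\<in>UNIV. U) (\<lambda>x. \<lambda>i\<in>UNIV. x i) = (\<Pi>\<^sub>M i\<in>UNIV. distr rand_space U (\<lambda>\<omega>. \<omega> i))"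
    unfolding 1 2 by (simp add: rand_space_def distr_id2 sets_PiM cong: distr_cong)
qed simp


lemma shift_meas: "(\<lambda>\<omega>. \<lambda>q. \<omega> (q @ p)) \<in> rand_space \<rightarrow>\<^sub>M rand_space"
proof -
  have "(\<lambda>\<omega> q. \<omega> (q @ p)) \<in> rand_space \<rightarrow>\<^sub>M (\<Pi>\<^sub>M i\<in>UNIV. U)"
    by (rule measurable_PiM_single') (auto simp: rand_space_def intro!: measurable_component_singleton)
  then show ?thesis by (simp add: rand_space_def)
qed

lemma comp_meas: "(\<lambda>\<omega>. \<omega> p) \<in> rand_space \<rightarrow>\<^sub>M U"
  unfolding rand_space_def by (rule measurable_component_singleton) auto

lemma shift_prob:
  assumes "E \<in> sets rand_space"
  shows "measure rand_space {\<omega> \<in> space rand_space. (\<lambda>q. \<omega> (q @ p)) \<in> E} = measure rand_space E"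
proof -
  have inj: "inj_on (\<lambda>q. q @ p) UNIV" by (auto simp: inj_on_def)
  have e: "(\<lambda>\<omega> n. \<omega> (n @ p)) = (\<lambda>\<omega>. \<lambda>n\<in>UNIV. \<omega> (n @ p))"
    by (auto simp: fun_eq_iff restrict_def)
  have d: "distr rand_space rand_space (\<lambda>\<omega> n. \<omega> (n @ p)) = rand_space"
    apply (subst e)
    unfolding rand_space_def by (rule distr_PiM_reindex[OF _ inj]) (auto intro: prob_U)
  have "measure rand_space E = measure (distr rand_space rand_space (\<lambda>\<omega> n. \<omega> (n @ p))) E"
    by (simp add: d)
  also have "\<dots> = measure rand_space ((\<lambda>\<omega> n. \<omega> (n @ p)) -` E \<inter> space rand_space)"
    by (rule measure_distr[OF shift_meas assms])
  finally show ?thesis by (simp add: vimage_def Int_def conj_commute)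
qed

lemma comp_prob:
  assumes "G \<in> sets borel"
  shows "measure rand_space {\<omega> \<in> space rand_space. \<omega> p \<in> G} = measure U G"
proof -
  have d: "distr rand_space U (\<lambda>\<omega>. \<omega> p) = U"
    unfolding rand_space_def by (rule distr_PiM_component) (auto intro: prob_U)
  have "measure U G = measure (distr rand_space U (\<lambda>\<omega>. \<omega> p)) G"
    by (simp add: d)
  also have "\<dots> = measure rand_space ((\<lambda>\<omega>. \<omega> p) -` G \<inter> space rand_space)"
    by (rule measure_distr[OF comp_meas]) (use assms in simp)
  finally show ?thesis by (simp add: vimage_def Int_def conj_commute)
qed


definition KK :: "nat \<Rightarrow> nat list set" where
  "KK j = (if j = 0 then {[]} else if j = 1 then range (\<lambda>q. q @ [0]) else range (\<lambda>q. q @ [1]))"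

lemma restr_meas:
  assumes "\<And>q. q @ [b] \<in> K"
  shows "(\<lambda>f. \<lambda>q. f (q @ [b])) \<in> (\<Pi>\<^sub>M i\<in>K. U) \<rightarrow>\<^sub>M rand_space"
proof -
  have "(\<lambda>f q. f (q @ [b])) \<in> (\<Pi>\<^sub>M i\<in>K. U) \<rightarrow>\<^sub>M (\<Pi>\<^sub>M i\<in>UNIV. U)"
    by (rule measurable_PiM_single') (auto intro!: measurable_component_singleton assms)
  then show ?thesis by (simp add: rand_space_def)
qed

lemma indep3:
  assumes G: "G \<in> sets borel" and E1: "E1 \<in> sets rand_space" and E2: "E2 \<in> sets rand_space"
  shows "measure rand_space {\<omega> \<in> space rand_space. \<omega> [] \<in> G \<and> (\<lambda>q. \<omega> (q @ [0])) \<in> E1 \<and> (\<lambda>q. \<omega> (q @ [1])) \<in> E2}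
    = measure U G * measure rand_space E1 * measure rand_space E2"
proof -
  have disj: "disjoint_family_on KK {0,1,2}"
    unfolding disjoint_family_on_def KK_def by auto
  have ind: "R.indep_vars (\<lambda>j. \<Pi>\<^sub>M i\<in>KK j. U) (\<lambda>j \<omega>. restrict (\<lambda>i. \<omega> i) (KK j)) {0,1,2}"
    by (rule R.indep_vars_restrict[OF indep_coord _ disj]) auto
  define A where "A = (\<lambda>j::nat. if j = 0 then {f \<in> space (\<Pi>\<^sub>M i\<in>KK j. U). f [] \<in> G}
     else if j = 1 then (\<lambda>f. \<lambda>q. f (q @ [0])) -` E1 \<inter> space (\<Pi>\<^sub>M i\<in>KK j. U)
     else (\<lambda>f. \<lambda>q. f (q @ [1])) -` E2 \<inter> space (\<Pi>\<^sub>M i\<in>KK j. U))"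
  have A: "A j \<in> sets (\<Pi>\<^sub>M i\<in>KK j. U)" if jj: "j \<in> {0,1,2}" for j
  proof -
    consider "j = 0" | "j = 1" | "j = 2" using jj by fastforce
    then show ?thesis
    proof cases
      case 1
      have "(\<lambda>f. f []) \<in> (\<Pi>\<^sub>M i\<in>KK 0. U) \<rightarrow>\<^sub>M U"
        by (rule measurable_component_singleton) (simp add: KK_def)
      then have "(\<lambda>f. f []) -` G \<inter> space (\<Pi>\<^sub>M i\<in>KK 0. U) \<in> sets (\<Pi>\<^sub>M i\<in>KK 0. U)"
        by (rule measurable_sets) (use G in simp)
      then show ?thesis using 1 by (simp add: A_def vimage_def Int_def conj_commute)
    next
      case 2
      show ?thesis using 2 unfolding A_def
        by (auto intro!: measurable_sets[OF restr_meas E1] simp: KK_def)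
    next
      case 3
      show ?thesis using 3 unfolding A_def
        by (auto intro!: measurable_sets[OF restr_meas E2] simp: KK_def)
    qed
  qed
  have pre0: "(\<lambda>\<omega>. restrict (\<lambda>i. \<omega> i) (KK 0)) -` A 0 \<inter> space rand_space = {\<omega> \<in> space rand_space. \<omega> [] \<in> G}"
    by (auto simp: A_def KK_def space_PiM space_rand)
  have pre1: "(\<lambda>\<omega>. restrict (\<lambda>i. \<omega> i) (KK 1)) -` A 1 \<inter> space rand_space = {\<omega> \<in> space rand_space. (\<lambda>q. \<omega> (q @ [0])) \<in> E1}"
    by (auto simp: A_def KK_def space_PiM space_rand)
  have pre2: "(\<lambda>\<omega>. restrict (\<lambda>i. \<omega> i) (KK 2)) -` A 2 \<inter> space rand_space = {\<omega> \<in> space rand_space. (\<lambda>q. \<omega> (q @ [1])) \<in> E2}"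
    by (auto simp: A_def KK_def space_PiM space_rand)
  have "R.prob (\<Inter>j\<in>{0,1,2}. (\<lambda>\<omega>. restrict (\<lambda>i. \<omega> i) (KK j)) -` A j \<inter> space rand_space)
     = (\<Prod>j\<in>{0,1,2}. R.prob ((\<lambda>\<omega>. restrict (\<lambda>i. \<omega> i) (KK j)) -` A j \<inter> space rand_space))"
    by (rule R.indep_varsD[OF ind]) (use A in auto)
  also have "\<dots> = measure U G * measure rand_space E1 * measure rand_space E2"
    using comp_prob[OF G, of "[]"] shift_prob[OF E1, of "[0]"] shift_prob[OF E2, of "[1]"]
    by (simp add: pre0 pre1[simplified] pre2)
  also have "(\<Inter>j\<in>{0,1,2}. (\<lambda>\<omega>. restrict (\<lambda>i. \<omega> i) (KK j)) -` A j \<inter> space rand_space)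
     = {\<omega> \<in> space rand_space. \<omega> [] \<in> G \<and> (\<lambda>q. \<omega> (q @ [0])) \<in> E1 \<and> (\<lambda>q. \<omega> (q @ [1])) \<in> E2}"
    using pre0 pre1 pre2 by auto
  finally show ?thesis .
qed



lemma diam_ge:
  assumes "finite C" "p \<in> C" "q \<in> C"
  shows "d p q \<le> diam d C"
proof -
  have "finite {d p q | p q. p \<in> C \<and> q \<in> C}"
  proof -
    have "{d p q | p q. p \<in> C \<and> q \<in> C} = (\<lambda>(p,q). d p q) ` (C \<times> C)" by auto
    then show ?thesis using assms by simp
  qed
  then show ?thesis unfolding diam_def using assms by (auto intro!: Max_ge)
qed

lemma diam_attained:
  assumes "finite C" "C \<noteq> {}"
  shows "\<exists>p\<in>C. \<exists>q\<in>C. diam d C = d p q"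
proof -
  have e: "{d p q | p q. p \<in> C \<and> q \<in> C} = (\<lambda>(p,q). d p q) ` (C \<times> C)" by auto
  have "Max {d p q | p q. p \<in> C \<and> q \<in> C} \<in> {d p q | p q. p \<in> C \<and> q \<in> C}"
    unfolding e using assms by (intro Max_in) auto
  then show ?thesis unfolding diam_def using assms by auto
qed

lemma diam_nonneg:
  assumes "metric_on X d" "finite X" "C \<subseteq> X"
  shows "0 \<le> diam d C"
proof (cases "C = {}")
  case True then show ?thesis by (simp add: diam_def)
next
  case False
  then obtain p where p: "p \<in> C" by auto
  have "d p p = 0" using assms p unfolding metric_on_def by auto
  moreover have "d p p \<le> diam d C" using p assms finite_subset by (intro diam_ge) auto
  ultimately show ?thesis by simp
qed

lemma cost_nonneg:
  assumes "metric_on X d" "finite X" "\<forall>C\<in>Cs. C \<subseteq> X"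
  shows "0 \<le> cost d Cs"
  unfolding cost_def using assms diam_nonneg by (intro sum_nonneg) blast

lemma clusterings_finite: "finite S \<Longrightarrow> finite {Cs. is_clustering i S Cs}"
  by (rule finite_subset[of _ "Pow (Pow S)"]) (auto simp: is_clustering_def)

lemma opt_le:
  assumes "metric_on X d" "finite X" "S \<subseteq> X" "is_clustering i S Q"
  shows "opt d i S \<le> cost d Q"
  unfolding opt_def
proof (rule cInf_lower)
  show "cost d Q \<in> {cost d Cs |Cs. is_clustering i S Cs}" using assms by auto
  show "bdd_below {cost d Cs |Cs. is_clustering i S Cs}"
  proof (rule bdd_belowI)
    fix c assume "c \<in> {cost d Cs |Cs. is_clustering i S Cs}"
    then obtain Cs where c: "c = cost d Cs" "is_clustering i S Cs" by auto
    then have "\<forall>C\<in>Cs. C \<subseteq> X" using assms(3) unfolding is_clustering_def by blast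
    then show "0 \<le> c" using c cost_nonneg[OF assms(1,2)] by auto
  qed
qed

lemma opt_attained:
  assumes "finite X" "S \<subseteq> X" "1 \<le> i"
  shows "\<exists>Q. is_clustering i S Q \<and> cost d Q = opt d i S"
proof -
  have fS: "finite S" using assms finite_subset by auto
  have ne: "{cost d Cs |Cs. is_clustering i S Cs} \<noteq> {}"
    using assms by (auto simp: is_clustering_def intro!: exI[of _ "{S}"])
  have fin: "finite {cost d Cs |Cs. is_clustering i S Cs}"
  proof -
    have "{cost d Cs |Cs. is_clustering i S Cs} = cost d ` {Cs. is_clustering i S Cs}" by auto
    then show ?thesis using clusterings_finite[OF fS] by simp
  qed
  have "opt d i S = Min {cost d Cs |Cs. is_clustering i S Cs}"
    unfolding opt_def by (rule cInf_eq_Min[OF fin ne])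
  moreover have "Min {cost d Cs |Cs. is_clustering i S Cs} \<in> {cost d Cs |Cs. is_clustering i S Cs}"
    by (rule Min_in[OF fin ne])
  ultimately show ?thesis by auto
qed

lemma opt_nonneg:
  assumes "metric_on X d" "finite X" "S \<subseteq> X" "1 \<le> i"
  shows "0 \<le> opt d i S"
proof -
  obtain Q where "is_clustering i S Q" "cost d Q = opt d i S"
    using opt_attained[OF assms(2-4)] by blast
  then show ?thesis using cost_nonneg[OF assms(1,2), of Q] assms(3)
    by (auto simp: is_clustering_def)
qed



lemma tri: "metric_on X d \<Longrightarrow> a \<in> X \<Longrightarrow> b \<in> X \<Longrightarrow> c \<in> X \<Longrightarrow> d a c \<le> d a b + d b c"
  unfolding metric_on_def by blast

lemma dself: "metric_on X d \<Longrightarrow> a \<in> X \<Longrightarrow> d a a = 0"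
  unfolding metric_on_def by blast

lemma U_fin: "emeasure U A \<noteq> \<infinity>"
  using UU.emeasure_finite[of A] by simp

lemma U_meas: "B \<in> sets borel \<Longrightarrow> measure U B = measure lborel ({0..1} \<inter> B)"
  by (subst measure_uniform_measure) auto

lemma U_Ico: "l \<le> h \<Longrightarrow> measure U {l..<h} \<le> h - l"
proof -
  assume lh: "l \<le> h"
  have "measure U {l..<h} = measure lborel ({0..1} \<inter> {l..<h})" by (rule U_meas) simp
  also have "\<dots> \<le> measure lborel {l..h}"
    by (rule measure_mono_fmeasurable) (use lh in \<open>auto simp: fmeasurable_def\<close>)
  also have "\<dots> = h - l" using lh by simp
  finally show ?thesis .
qed

lemma U_out: "measure U (UNIV - {0..<1}) = 0"
proof -
  have "measure U (UNIV - {0..<1}) = measure lborel ({0..1} \<inter> (UNIV - {0..<1::real}))"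
    using U_meas[of "UNIV - {0..<1}"] by simp
  also have "{0..1} \<inter> (UNIV - {0..<1}) = {1::real}" by auto
  finally show ?thesis by simp
qed

lemma good_prob:
  assumes X: "finite X" "metric_on X d" and S: "S \<subseteq> X" and x: "x \<in> S" and D: "D > 0"
    and Q: "finite Q" "\<forall>C\<in>Q. C \<noteq> {} \<and> C \<subseteq> S"
  defines "Good \<equiv> {u::real. 0 \<le> u \<and> u < 1 \<and> (\<forall>C\<in>Q. (\<forall>z\<in>C. d x z \<le> u * D) \<or> (\<forall>z\<in>C. \<not> d x z \<le> u * D))}"
  shows "Good \<in> sets borel" "measure U Good \<ge> 1 - cost d Q / D"
proof -
  have fC: "finite C" if "C \<in> Q" for C
  proof -
    have "C \<subseteq> X" using that Q S by auto
    then show ?thesis using X(1) by (rule finite_subset)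
  qed
  show Gm: "Good \<in> sets borel" unfolding Good_def using Q(1) fC by measurable
  define a where "a C = Min (d x ` C)" for C
  define b where "b C = Max (d x ` C)" for C
  have ab: "a C \<le> b C" "b C - a C \<le> diam d C" if C: "C \<in> Q" for C
  proof -
    have ne: "d x ` C \<noteq> {}" "finite (d x ` C)" using C Q fC by auto
    obtain z where z: "z \<in> C" "a C = d x z" using Min_in[OF ne(2) ne(1)] unfolding a_def by auto
    obtain w where w: "w \<in> C" "b C = d x w" using Max_in[OF ne(2) ne(1)] unfolding b_def by auto
    have "d x z \<le> Max (d x ` C)" using ne(2) z(1) by (intro Max_ge) auto
    then show "a C \<le> b C" using z(2) unfolding b_def by simp
    have "d x w \<le> d x z + d z w"
      using C Q S x z w by (intro tri[OF X(2)]) auto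
    moreover have "d z w \<le> diam d C" using z w fC[OF C] by (intro diam_ge) auto
    ultimately show "b C - a C \<le> diam d C" using z w by simp
  qed
  have sub: "UNIV - Good \<subseteq> (UNIV - {0..<1}) \<union> (\<Union>C\<in>Q. {a C / D ..< b C / D})"
  proof
    fix u assume "u \<in> UNIV - Good"
    then have "\<not> (0 \<le> u \<and> u < 1) \<or> (\<exists>C\<in>Q. (\<exists>z\<in>C. d x z \<le> u * D) \<and> (\<exists>w\<in>C. d x w > u * D))"
    proof (cases "0 \<le> u \<and> u < 1")
      case True
      with \<open>u \<in> UNIV - Good\<close> obtain C where C: "C \<in> Q"
        "\<not> (\<forall>z\<in>C. d x z \<le> u * D)" "\<not> (\<forall>z\<in>C. \<not> d x z \<le> u * D)"
        unfolding Good_def by blast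
      then obtain z w where "z \<in> C" "d x z \<le> u * D" "w \<in> C" "\<not> d x w \<le> u * D" by blast
      then show ?thesis using C(1) by (auto simp: not_le)
    qed simp
    then show "u \<in> (UNIV - {0..<1}) \<union> (\<Union>C\<in>Q. {a C / D ..< b C / D})"
    proof
      assume "\<exists>C\<in>Q. (\<exists>z\<in>C. d x z \<le> u * D) \<and> (\<exists>w\<in>C. d x w > u * D)"
      then obtain C z w where C: "C \<in> Q" "z \<in> C" "w \<in> C" "d x z \<le> u * D" "d x w > u * D" by blast
      have "a C \<le> d x z" unfolding a_def using C fC by auto
      moreover have "d x w \<le> b C" unfolding b_def using C fC by auto
      ultimately have "a C \<le> u * D" "u * D < b C" using C by auto
      then have "a C / D \<le> u" "u < b C / D" using D by (auto simp: field_simps)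
      then show ?thesis using C by auto
    qed auto
  qed
  have "measure U (UNIV - Good) \<le> measure U ((UNIV - {0..<1}) \<union> (\<Union>C\<in>Q. {a C / D ..< b C / D}))"
    by (rule UU.finite_measure_mono[OF sub]) (use Q in \<open>auto intro!: sets.Un sets.Diff sets.finite_UN\<close>)
  also have "\<dots> \<le> measure U (UNIV - {0..<1}) + measure U (\<Union>C\<in>Q. {a C / D ..< b C / D})"
    apply (rule measure_subadditive)
    apply (use Q in \<open>auto intro!: sets.Un sets.Diff sets.finite_UN\<close>)[2]
    apply (rule U_fin)+
    done
  also have "\<dots> \<le> 0 + (\<Sum>C\<in>Q. measure U {a C / D ..< b C / D})"
  proof -
    have "measure U (\<Union>C\<in>Q. {a C / D ..< b C / D}) \<le> (\<Sum>C\<in>Q. measure U {a C / D ..< b C / D})"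
      by (rule UU.finite_measure_subadditive_finite) (use Q in auto)
    then show ?thesis using U_out by linarith
  qed
  also have "\<dots> \<le> (\<Sum>C\<in>Q. diam d C / D)"
  proof -
    have "measure U {a C / D ..< b C / D} \<le> diam d C / D" if "C \<in> Q" for C
    proof -
      have "a C / D \<le> b C / D" using ab[OF that] D by (simp add: divide_right_mono)
      then have "measure U {a C / D ..< b C / D} \<le> b C / D - a C / D" by (rule U_Ico)
      also have "\<dots> = (b C - a C) / D" by (simp add: diff_divide_distrib)
      also have "\<dots> \<le> diam d C / D" using ab[OF that] D by (simp add: divide_right_mono)
      finally show ?thesis .
    qed
    then show ?thesis by (simp add: sum_mono)
  qed
  also have "\<dots> = cost d Q / D" unfolding cost_def by (simp add: sum_divide_distrib)
  finally have "measure U (UNIV - Good) \<le> cost d Q / D" .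
  moreover have "measure U (UNIV - Good) = 1 - measure U Good"
    using UU.prob_compl[of Good] Gm by simp
  ultimately show "measure U Good \<ge> 1 - cost d Q / D" by simp
qed



lemma partition_facts:
  assumes X: "finite X" "metric_on X d" and S: "S \<subseteq> X" and x: "x \<in> S" and y: "y \<in> S"
    and dxy: "d x y = D" and D: "D > 0"
    and Q: "finite Q" "\<forall>C\<in>Q. C \<noteq> {} \<and> C \<subseteq> S" "\<Union>Q = S" "card Q \<le> r"
    and u: "0 \<le> u" "u < 1" "\<forall>C\<in>Q. (\<forall>z\<in>C. d x z \<le> u * D) \<or> (\<forall>z\<in>C. \<not> d x z \<le> u * D)"
    and T: "T = {z \<in> S. d x z \<le> u * D}"
  shows "is_clustering (card {C\<in>Q. C \<subseteq> T}) T {C\<in>Q. C \<subseteq> T}"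
    "is_clustering (r - card {C\<in>Q. C \<subseteq> T}) (S - T) {C\<in>Q. C \<subseteq> S - T}"
    "1 \<le> card {C\<in>Q. C \<subseteq> T}" "1 \<le> r - card {C\<in>Q. C \<subseteq> T}" "card {C\<in>Q. C \<subseteq> T} < r"
    "cost d {C\<in>Q. C \<subseteq> T} + cost d {C\<in>Q. C \<subseteq> S - T} = cost d Q"
    "T \<subseteq> S"
proof -
  define OT where "OT = {C\<in>Q. C \<subseteq> T}"
  define OS where "OS = {C\<in>Q. C \<subseteq> S - T}"
  have xT: "x \<in> T" using x dself[OF X(2), of x] S u D T by auto
  have yT: "y \<notin> T"
  proof
    assume "y \<in> T"
    then have "D \<le> u * D" using T dxy by auto
    moreover have "u * D < 1 * D" using u D by (intro mult_strict_right_mono) auto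
    ultimately show False by simp
  qed
  have split: "C \<subseteq> T \<or> C \<subseteq> S - T" if "C \<in> Q" for C
    using u(3) that Q(2) T by blast
  have fin: "finite OT" "finite OS" using Q(1) by (auto simp: OT_def OS_def)
  have disj: "OT \<inter> OS = {}" using Q(2) by (auto simp: OT_def OS_def)
  have un: "OT \<union> OS = Q" using split by (auto simp: OT_def OS_def)
  have UT: "\<Union>OT = T"
  proof
    show "\<Union>OT \<subseteq> T" by (auto simp: OT_def)
    show "T \<subseteq> \<Union>OT"
    proof
      fix z assume z: "z \<in> T"
      then have "z \<in> \<Union>Q" using Q(3) T by auto
      then obtain C where C: "C \<in> Q" "z \<in> C" by auto
      then have "C \<subseteq> T" using split[OF C(1)] z by auto
      then show "z \<in> \<Union>OT" using C by (auto simp: OT_def)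
    qed
  qed
  have US: "\<Union>OS = S - T"
  proof
    show "\<Union>OS \<subseteq> S - T" by (auto simp: OS_def)
    show "S - T \<subseteq> \<Union>OS"
    proof
      fix z assume z: "z \<in> S - T"
      then have "z \<in> \<Union>Q" using Q(3) by auto
      then obtain C where C: "C \<in> Q" "z \<in> C" by auto
      then have "C \<subseteq> S - T" using split[OF C(1)] z by auto
      then show "z \<in> \<Union>OS" using C by (auto simp: OS_def)
    qed
  qed
  have c1: "1 \<le> card OT"
  proof -
    have "OT \<noteq> {}" using UT xT by auto
    then show ?thesis using fin by (simp add: Suc_le_eq card_gt_0_iff)
  qed
  have c2: "1 \<le> card OS"
  proof -
    have "OS \<noteq> {}" using US yT y by auto
    then show ?thesis using fin by (simp add: Suc_le_eq card_gt_0_iff)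
  qed
  have csum: "card OT + card OS = card Q"
    using card_Un_disjoint[OF fin disj] un by simp
  show "is_clustering (card {C\<in>Q. C \<subseteq> T}) T {C\<in>Q. C \<subseteq> T}"
    using fin UT unfolding OT_def is_clustering_def by simp
  show "is_clustering (r - card {C\<in>Q. C \<subseteq> T}) (S - T) {C\<in>Q. C \<subseteq> S - T}"
    using fin US csum Q(4) unfolding OT_def[symmetric] OS_def[symmetric] is_clustering_def by simp
  show "1 \<le> card {C\<in>Q. C \<subseteq> T}" using c1 by (simp add: OT_def)
  show "1 \<le> r - card {C\<in>Q. C \<subseteq> T}" using c2 csum Q(4) by (simp add: OT_def[symmetric])
  show "card {C\<in>Q. C \<subseteq> T} < r" using c2 csum Q(4) by (simp add: OT_def[symmetric])
  show "cost d {C\<in>Q. C \<subseteq> T} + cost d {C\<in>Q. C \<subseteq> S - T} = cost d Q"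
    unfolding OT_def[symmetric] OS_def[symmetric] cost_def
    using sum.union_disjoint[OF fin disj, of "diam d"] un by simp
  show "T \<subseteq> S" using T by auto
qed

lemma cost_Un:
  assumes "finite X" "metric_on X d" "finite A" "finite B" "\<forall>C\<in>A \<union> B. C \<subseteq> X"
  shows "cost d (A \<union> B) \<le> cost d A + cost d B"
proof -
  have "cost d (A \<union> B) = cost d A + cost d B - cost d (A \<inter> B)"
    unfolding cost_def using sum_Un[OF assms(3,4)] by simp
  moreover have "0 \<le> cost d (A \<inter> B)" using assms by (intro cost_nonneg[OF assms(2,1)]) auto
  ultimately show ?thesis by simp
qed



lemma main:
  assumes X: "finite X" "metric_on X d" and sel: "diam_selector X d sel"
    and eps: "0 \<le> \<epsilon>" "\<epsilon> < 1"
  shows "S \<subseteq> X \<Longrightarrow> S \<noteq> {} \<Longrightarrow> 1 \<le> r \<Longrightarrow> r \<le> t \<Longrightarrow>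
    \<epsilon> ^ (r - 1) \<le> measure rand_space
      {\<omega> \<in> space rand_space. cost d (recMSD sel d \<omega> [] S t r) \<le> opt d r S / (1 - \<epsilon>)}"
proof (induction t arbitrary: S r)
  case 0 then show ?case by simp
next
  case (Suc t')
  note S = Suc.prems(1,2) and r = Suc.prems(3,4)
  define E where "E = {\<omega> \<in> space rand_space. cost d (recMSD sel d \<omega> [] S (Suc t') r) \<le> opt d r S / (1 - \<epsilon>)}"
  have fS: "finite S" using S X finite_subset by auto
  define D where "D = diam d S"
  define x where "x = fst (sel S)"
  define y where "y = snd (sel S)"
  have xy: "x \<in> S" "y \<in> S" "d x y = D"
    using sel S unfolding diam_selector_def x_def y_def D_def by auto
  have Em: "E \<in> sets rand_space"
    unfolding E_def
    by (rule srv_pred[OF srv_rec[OF fS], where P="\<lambda>v. cost d (v r) \<le> opt d r S / (1 - \<epsilon>)"])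
  obtain Q where Q: "is_clustering r S Q" "cost d Q = opt d r S"
    using opt_attained[OF X(1) S(1) r(1)] by blast
  have opt0: "0 \<le> opt d r S" by (rule opt_nonneg[OF X(2,1) S(1) r(1)])
  have e1: "0 < 1 - \<epsilon>" using eps by simp
  show ?case
  proof (cases "(1 - \<epsilon>) * D \<le> opt d r S")
    case True
    have "E = space rand_space"
    proof -
      have "cost d (recMSD sel d \<omega> [] S (Suc t') r) \<le> opt d r S / (1 - \<epsilon>)" for \<omega>
      proof -
        have "cost d (recMSD sel d \<omega> [] S (Suc t') r) \<le> D" unfolding D_def by (rule recMSD_le_diam)
        also have "D \<le> opt d r S / (1 - \<epsilon>)" using True e1 by (simp add: le_divide_eq mult.commute)
        finally show ?thesis .
      qed
      then show ?thesis unfolding E_def by auto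
    qed
    then have "measure rand_space E = 1" using R.prob_space by simp
    moreover have "\<epsilon> ^ (r - 1) \<le> 1" using eps by (intro power_le_one) auto
    ultimately show ?thesis unfolding E_def by simp
  next
    case False
    then have optD: "opt d r S < (1 - \<epsilon>) * D" by simp
    have Dpos: "D > 0"
    proof (rule ccontr)
      assume "\<not> D > 0"
      then have "(1 - \<epsilon>) * D \<le> 0" using e1 by (simp add: mult_nonneg_nonpos)
      then show False using optD opt0 by simp
    qed

    define Q' where "Q' = Q - {{}}"
    have Qfin: "finite Q" "card Q \<le> r" "\<Union>Q = S" using Q(1) unfolding is_clustering_def by auto
    have Q'fin: "finite Q'" using Qfin unfolding Q'_def by simp
    have Q'sub: "\<forall>C\<in>Q'. C \<noteq> {} \<and> C \<subseteq> S" using Qfin unfolding Q'_def by auto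
    have Q'un: "\<Union>Q' = S" using Qfin unfolding Q'_def by auto
    have Q'card: "card Q' \<le> r" using Qfin card_mono[of Q Q'] unfolding Q'_def by auto
    have costQ': "cost d Q' = opt d r S"
    proof -
      have "cost d Q' = cost d Q" unfolding cost_def Q'_def
        by (rule sum.mono_neutral_left) (use Qfin in \<open>auto simp: diam_def\<close>)
      then show ?thesis using Q(2) by simp
    qed
    have Q'X: "\<forall>C\<in>Q'. C \<subseteq> X" using Q'sub S by auto
    have sep: "\<not> (x \<in> C \<and> y \<in> C)" if C: "C \<in> Q'" for C
    proof
      assume xyC: "x \<in> C \<and> y \<in> C"
      have fC: "finite C" using C Q'X X(1) finite_subset by blast
      have "D \<le> diam d C" using xyC xy(3) diam_ge[OF fC] by metis
      also have "diam d C \<le> cost d Q'" unfolding cost_def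
        by (rule member_le_sum) (use C Q'fin Q'X diam_nonneg[OF X(2,1)] in auto)
      finally have "D \<le> opt d r S" using costQ' by simp
      moreover have "(1 - \<epsilon>) * D \<le> D" using eps Dpos by (simp add: mult_le_cancel_right1)
      ultimately show False using optD by simp
    qed
    have r2: "2 \<le> r"
    proof -
      obtain C1 where C1: "C1 \<in> Q'" "x \<in> C1" using xy Q'un by auto
      obtain C2 where C2: "C2 \<in> Q'" "y \<in> C2" using xy Q'un by auto
      have "C1 \<noteq> C2" using sep C1 C2 by auto
      then have "card {C1, C2} = 2" by simp
      moreover have "card {C1, C2} \<le> card Q'" using C1 C2 Q'fin by (intro card_mono) auto
      ultimately show ?thesis using Q'card by simp
    qed
    have t'0: "t' \<noteq> 0" using r r2 by simp
    have xney: "x \<noteq> y" using xy Dpos dself[OF X(2), of x] S by auto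
    have cardS: "\<not> card S \<le> 1"
    proof
      assume "card S \<le> 1"
      moreover have "card {x, y} \<le> card S" using xy fS by (intro card_mono) auto
      ultimately show False using xney by simp
    qed
    define Good where "Good = {u::real. 0 \<le> u \<and> u < 1 \<and> (\<forall>C\<in>Q'. (\<forall>z\<in>C. d x z \<le> u * D) \<or> (\<forall>z\<in>C. \<not> d x z \<le> u * D))}"
    have Gm: "Good \<in> sets borel" and Gp: "measure U Good \<ge> 1 - cost d Q' / D"
      using good_prob[OF X S(1) xy(1) Dpos Q'fin Q'sub] unfolding Good_def by auto
    have Geps: "\<epsilon> \<le> measure U Good"
    proof -
      have "cost d Q' / D \<le> 1 - \<epsilon>" using optD costQ' Dpos by (simp add: divide_le_eq mult.commute)
      then show ?thesis using Gp by simp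
    qed
    define S1 where "S1 u = {z \<in> S. d x z \<le> u * D}" for u
    define G where "G T = Good \<inter> {u. T \<subseteq> S \<and> (\<forall>z\<in>S. (d x z \<le> u * D) = (z \<in> T))}" for T
    have G_iff: "u \<in> G T \<longleftrightarrow> u \<in> Good \<and> S1 u = T" for u T
      unfolding G_def S1_def by auto
    have GmT: "G T \<in> sets borel" for T
      unfolding G_def using fS by (intro sets.Int Gm) measurable
    define iT where "iT T = card {C\<in>Q'. C \<subseteq> T}" for T
    define jT where "jT T = r - iT T" for T
    define E1 where "E1 T = {\<omega> \<in> space rand_space. cost d (recMSD sel d \<omega> [] T t' (iT T)) \<le> opt d (iT T) T / (1 - \<epsilon>)}" for T
    define E2 where "E2 T = {\<omega> \<in> space rand_space. cost d (recMSD sel d \<omega> [] (S - T) t' (jT T)) \<le> opt d (jT T) (S - T) / (1 - \<epsilon>)}" for T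
    define H where "H T = {\<omega> \<in> space rand_space. \<omega> [] \<in> G T \<and> (\<lambda>q. \<omega> (q @ [0])) \<in> E1 T \<and> (\<lambda>q. \<omega> (q @ [1])) \<in> E2 T}" for T
    have E1m: "E1 T \<in> sets rand_space" if "T \<subseteq> S" for T
    proof -
      have "finite T" using that fS finite_subset by auto
      then show ?thesis unfolding E1_def
        by (rule srv_pred[OF srv_rec, where P="\<lambda>v. cost d (v (iT T)) \<le> opt d (iT T) T / (1 - \<epsilon>)"])
    qed
    have E2m: "E2 T \<in> sets rand_space" for T
    proof -
      have "finite (S - T)" using fS by auto
      then show ?thesis unfolding E2_def
        by (rule srv_pred[OF srv_rec, where P="\<lambda>v. cost d (v (jT T)) \<le> opt d (jT T) (S - T) / (1 - \<epsilon>)"])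
    qed
    have Hm: "H T \<in> sets rand_space" if "T \<subseteq> S" for T
    proof -
      have "H T = {\<omega> \<in> space rand_space. \<omega> [] \<in> G T} \<inter> ((\<lambda>\<omega>. \<lambda>q. \<omega> (q @ [0])) -` E1 T \<inter> space rand_space)
          \<inter> ((\<lambda>\<omega>. \<lambda>q. \<omega> (q @ [1])) -` E2 T \<inter> space rand_space)"
        unfolding H_def by auto
      moreover have "{\<omega> \<in> space rand_space. \<omega> [] \<in> G T} \<in> sets rand_space"
      proof -
        have "(\<lambda>\<omega>. \<omega> []) -` G T \<inter> space rand_space \<in> sets rand_space"
          by (rule measurable_sets[OF comp_meas]) (use GmT in simp)
        then show ?thesis by (simp add: vimage_def Int_def conj_commute)
      qed
      ultimately show ?thesis
        using measurable_sets[OF shift_meas E1m[OF that]] measurable_sets[OF shift_meas E2m] by auto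
    qed

    have Good_D: "0 \<le> u" "u < 1" "\<forall>C\<in>Q'. (\<forall>z\<in>C. d x z \<le> u * D) \<or> (\<forall>z\<in>C. \<not> d x z \<le> u * D)"
      if "u \<in> Good" for u using that unfolding Good_def by auto
    note pf = partition_facts[OF X S(1) xy(1) xy(2) xy(3) Dpos Q'fin Q'sub Q'un Q'card Good_D]
    have xS1: "x \<in> S1 u" if "0 \<le> u" for u
      using xy(1) dself[OF X(2), of x] S(1) that Dpos unfolding S1_def by auto
    have yS1: "y \<notin> S1 u" if "u < 1" for u
    proof
      assume "y \<in> S1 u"
      then have "D \<le> u * D" using xy(3) unfolding S1_def by auto
      moreover have "u * D < 1 * D" using that Dpos by (intro mult_strict_right_mono) auto
      ultimately show False by simp
    qed
    have HE: "H T \<subseteq> E" if T: "T \<subseteq> S" for T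
    proof
      fix \<omega> assume \<omega>: "\<omega> \<in> H T"
      define u where "u = \<omega> []"
      have uG: "u \<in> Good" "S1 u = T" using \<omega> G_iff unfolding H_def u_def by auto
      have TS1: "T = {z \<in> S. d x z \<le> u * D}" using uG(2) unfolding S1_def by simp
      note pfu = pf[OF uG(1) uG(1) uG(1) TS1]
      have iT1: "is_clustering (iT T) T {C\<in>Q'. C \<subseteq> T}" using pfu(1) unfolding iT_def .
      have jT1: "is_clustering (jT T) (S - T) {C\<in>Q'. C \<subseteq> S - T}" using pfu(2) unfolding jT_def iT_def .
      have ij: "1 \<le> iT T" "1 \<le> jT T" "iT T + jT T = r"
        using pfu(3,4,5) unfolding jT_def iT_def by auto
      define A where "A = recMSD sel d (\<lambda>q. \<omega> (q @ [0])) [] T t'"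
      define B where "B = recMSD sel d (\<lambda>q. \<omega> (q @ [1])) [] (S - T) t'"
      have S1eq: "{z \<in> S. d (fst (sel S)) z \<le> \<omega> [] * diam d S} = T"
        using TS1 unfolding x_def D_def u_def by simp
      have rec: "recMSD sel d \<omega> [] S (Suc t') = combine d (Suc t') A B (\<lambda>i. {S})"
        using t'0 cardS recMSD_shift[of sel d \<omega> "[]" "[0]"] recMSD_shift[of sel d \<omega> "[]" "[1]"]
        by (simp add: Let_def S1eq A_def B_def)
      have "cost d (recMSD sel d \<omega> [] S (Suc t') r) \<le> cost d (A (iT T) \<union> B (jT T))"
        unfolding rec using combine_pair[of "iT T" "jT T" "Suc t'" d A B "\<lambda>i. {S}"] ij r by simp
      also have "\<dots> \<le> cost d (A (iT T)) + cost d (B (jT T))"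
      proof (rule cost_Un[OF X(1,2)])
        show "finite (A (iT T))" "finite (B (jT T))" unfolding A_def B_def using recMSD_sub by blast+
        show "\<forall>C\<in>A (iT T) \<union> B (jT T). C \<subseteq> X"
          using recMSD_sub[of sel d "\<lambda>q. \<omega> (q @ [0])" "[]" T t' "iT T"]
            recMSD_sub[of sel d "\<lambda>q. \<omega> (q @ [1])" "[]" "S - T" t' "jT T"] T S(1)
          unfolding A_def B_def by blast
      qed
      also have "\<dots> \<le> opt d (iT T) T / (1 - \<epsilon>) + opt d (jT T) (S - T) / (1 - \<epsilon>)"
        using \<omega> unfolding H_def E1_def E2_def A_def B_def by (auto intro: add_mono)
      also have "\<dots> = (opt d (iT T) T + opt d (jT T) (S - T)) / (1 - \<epsilon>)"
        by (simp add: add_divide_distrib)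
      also have "\<dots> \<le> (cost d {C\<in>Q'. C \<subseteq> T} + cost d {C\<in>Q'. C \<subseteq> S - T}) / (1 - \<epsilon>)"
      proof (rule divide_right_mono)
        show "opt d (iT T) T + opt d (jT T) (S - T) \<le> cost d {C\<in>Q'. C \<subseteq> T} + cost d {C\<in>Q'. C \<subseteq> S - T}"
          using opt_le[OF X(2,1) _ iT1] opt_le[OF X(2,1) _ jT1] T S(1) by (intro add_mono) auto
      qed (use e1 in simp)
      also have "\<dots> = opt d r S / (1 - \<epsilon>)" using pfu(6) costQ' by simp
      finally show "\<omega> \<in> E" unfolding E_def using \<omega> unfolding H_def by simp
    qed

    have Hp: "measure U (G T) * \<epsilon> ^ (r - 2) \<le> measure rand_space (H T)" if T: "T \<subseteq> S" for T
    proof -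
      have Hm_eq: "measure rand_space (H T) = measure U (G T) * measure rand_space (E1 T) * measure rand_space (E2 T)"
        unfolding H_def by (rule indep3[OF GmT E1m[OF T] E2m])
      show ?thesis
      proof (cases "G T = {}")
        case True
        then show ?thesis using Hm_eq by simp
      next
        case False
        then obtain u where u: "u \<in> G T" by auto
        then have uG: "u \<in> Good" "S1 u = T" using G_iff by auto
        have TS1: "T = {z \<in> S. d x z \<le> u * D}" using uG(2) unfolding S1_def by simp
        note pfu = pf[OF uG(1) uG(1) uG(1) TS1]
        have ij: "1 \<le> iT T" "1 \<le> jT T" "iT T + jT T = r"
          using pfu(3,4,5) unfolding jT_def iT_def by auto
        have Tne: "T \<noteq> {}" using xS1[OF Good_D(1)[OF uG(1)]] uG(2) by auto
        have STne: "S - T \<noteq> {}" using yS1[OF Good_D(2)[OF uG(1)]] uG(2) xy(2) by auto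
        have IH1: "\<epsilon> ^ (iT T - 1) \<le> measure rand_space (E1 T)"
          unfolding E1_def by (rule Suc.IH) (use T S(1) Tne ij r in auto)
        have IH2: "\<epsilon> ^ (jT T - 1) \<le> measure rand_space (E2 T)"
          unfolding E2_def by (rule Suc.IH) (use T S(1) STne ij r in auto)
        have "\<epsilon> ^ (r - 2) = \<epsilon> ^ (iT T - 1) * \<epsilon> ^ (jT T - 1)"
        proof -
          have "r - 2 = (iT T - 1) + (jT T - 1)" using ij by simp
          then show ?thesis by (simp add: power_add)
        qed
        also have "\<dots> \<le> measure rand_space (E1 T) * measure rand_space (E2 T)"
          using IH1 IH2 eps by (intro mult_mono) auto
        finally have "measure U (G T) * \<epsilon> ^ (r - 2) \<le> measure U (G T) * (measure rand_space (E1 T) * measure rand_space (E2 T))"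
          by (intro mult_left_mono) auto
        then show ?thesis using Hm_eq by (simp add: mult.assoc)
      qed
    qed
    have disjG: "disjoint_family_on G (Pow S)"
      unfolding disjoint_family_on_def by (auto simp: G_iff)
    have disjH: "disjoint_family_on H (Pow S)"
    proof -
      have "H T \<inter> H T' = {}" if "T \<noteq> T'" for T T'
        using that by (auto simp: H_def G_iff)
      then show ?thesis unfolding disjoint_family_on_def by blast
    qed
    have UG: "(\<Union>T\<in>Pow S. G T) = Good"
    proof
      show "(\<Union>T\<in>Pow S. G T) \<subseteq> Good" by (auto simp: G_iff)
      show "Good \<subseteq> (\<Union>T\<in>Pow S. G T)"
      proof
        fix u assume "u \<in> Good"
        then have "u \<in> G (S1 u)" "S1 u \<in> Pow S" using G_iff unfolding S1_def by auto
        then show "u \<in> (\<Union>T\<in>Pow S. G T)" by blast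
      qed
    qed
    have "\<epsilon> ^ (r - 1) = \<epsilon> * \<epsilon> ^ (r - 2)"
    proof -
      have "r - 1 = Suc (r - 2)" using r2 by simp
      then show ?thesis by simp
    qed
    also have "\<dots> \<le> measure U Good * \<epsilon> ^ (r - 2)"
      using Geps eps by (intro mult_right_mono) auto
    also have "measure U Good = (\<Sum>T\<in>Pow S. measure U (G T))"
      unfolding UG[symmetric] by (rule UU.finite_measure_finite_Union) (use fS GmT disjG in auto)
    also have "(\<Sum>T\<in>Pow S. measure U (G T)) * \<epsilon> ^ (r - 2) = (\<Sum>T\<in>Pow S. measure U (G T) * \<epsilon> ^ (r - 2))"
      by (rule sum_distrib_right)
    also have "\<dots> \<le> (\<Sum>T\<in>Pow S. measure rand_space (H T))"
      by (rule sum_mono) (use Hp in auto)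
    also have "\<dots> = measure rand_space (\<Union>T\<in>Pow S. H T)"
      by (rule R.finite_measure_finite_Union[symmetric]) (use fS Hm disjH in auto)
    also have "\<dots> \<le> measure rand_space E"
      by (rule R.finite_measure_mono[OF _ Em]) (use HE in auto)
    finally show ?thesis unfolding E_def .
  qed
qed


theorem lemma2:
  fixes X :: "'a set" and d :: "'a \<Rightarrow> 'a \<Rightarrow> real" and k t r :: nat
    and S :: "'a set" and \<epsilon> :: real and sel :: "'a set \<Rightarrow> 'a \<times> 'a"
  assumes "finite X" and "metric_on X d" and "k > 0"
    and "diam_selector X d sel"
    and "S \<subseteq> X" and "S \<noteq> {}"
    and "1 \<le> t" and "t \<le> k"
    and "0 \<le> \<epsilon>" and "\<epsilon> < 1"
    and "1 \<le> r" and "r \<le> t"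
  shows "measure rand_space
           {\<omega> \<in> space rand_space. cost d (recMSD sel d \<omega> [] S t r) \<le> opt d r S / (1 - \<epsilon>)}
         \<ge> \<epsilon> ^ (r - 1)"
  using main[OF assms(1,2,4,9,10) assms(5,6,11,12)] .

end
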